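(* Let $\mathcal A=\mathbb N_+=\{1,2,\dots\}$, $\Omega=\mathcal A^{\mathbb N}$, and $\mathbb P$ the product measure with $\mathbb P[a_0,\dots,a_{n-1}]=\prod_{j<n}2^{-a_j}$. Let $\Omega_0=\{0,1\}^{\mathbb N}$ with σ-algebra $\mathcal F_0$ generated by cylinders and left shift $T_0$. Define $\theta(a_1,a_2)=1$ if $a_2=a_1+1$ and $0$ otherwise, $\Theta:\Omega\to\Omega_0$ by $(\Theta\omega)_j=\theta(\omega_j,\omega_{j+1})$, and $\mathbb P_0=\mathbb P\circ\Theta^{-1}$. Then (a) $\mathbb P_0$ is $T_0$-invariant; (b) $\mathbb P_0$ is ψ-mixing; (c) for $\omega\in\Omega_0$ with $\omega_j=1$ for all $j\ge0$, $\lim_{n\to\infty}\mathbb P_0(A^\omega_{n+1}\mid A^\omega_n)=0$.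
   Context: Cylinders in $\Omega_0$: $[b_0,\dots,b_{n-1}]_0=\{\omega\in\Omega_0:\omega_j=b_j,0\le j<n\}$, $A_n^\omega=[\omega_0,\dots,\omega_{n-1}]_0$. A probability $Q$ on $(\Omega_0,\mathcal F_0)$ is ψ-mixing if there is $\psi_m\ge0$, $\psi_m\to0$, with $|Q(E\cap T_0^{-(n+m)}F)-Q(E)Q(F)|\le\psi_mQ(E)Q(F)$ for all $m,n\in\mathbb N$, $E$ in the σ-algebra generated by coordinates $0,\dots,n-1$, and $F\in\mathcal F_0$. *)

theory Defs
  imports "HOL-Probability.Probability"
begin

text \<open>Single-letter law on the alphabet N_+ = {1,2,...}: P(a = k) = 2^(-k) for k >= 1.
  (geometric_pmf (1/2) gives mass (1/2)^(n+1) to n; shifting by Suc gives 2^(-k) to k.)\<close>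
definition letter_pmf :: "nat pmf" where
  "letter_pmf = map_pmf Suc (geometric_pmf (1/2))"

text \<open>The Bernoulli-type product measure P on Omega = A^N (sequences nat => nat;
  it is concentrated on sequences with all entries >= 1).\<close>
definition Pmeas :: "(nat \<Rightarrow> nat) measure" where
  "Pmeas = PiM UNIV (\<lambda>_. measure_pmf letter_pmf)"

text \<open>Omega_0 = {0,1}^N with the sigma-algebra generated by cylinders (= product sigma-algebra).\<close>
definition Omega0 :: "(nat \<Rightarrow> bool) measure" where
  "Omega0 = PiM UNIV (\<lambda>_. count_space UNIV)"

definition T0 :: "(nat \<Rightarrow> bool) \<Rightarrow> (nat \<Rightarrow> bool)" where
  "T0 \<omega> = (\<lambda>j. \<omega> (Suc j))"

definition theta :: "nat \<Rightarrow> nat \<Rightarrow> bool" where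
  "theta a1 a2 = (a2 = a1 + 1)"

definition Theta :: "(nat \<Rightarrow> nat) \<Rightarrow> (nat \<Rightarrow> bool)" where
  "Theta \<omega> = (\<lambda>j. theta (\<omega> j) (\<omega> (Suc j)))"

definition P0 :: "(nat \<Rightarrow> bool) measure" where
  "P0 = distr Pmeas Omega0 Theta"

definition cyl :: "(nat \<Rightarrow> bool) \<Rightarrow> nat \<Rightarrow> (nat \<Rightarrow> bool) set" where
  "cyl \<omega> n = {\<omega>'. \<forall>j<n. \<omega>' j = \<omega> j}"

definition coord_sigma :: "nat \<Rightarrow> (nat \<Rightarrow> bool) set set" where
  "coord_sigma n = sigma_sets UNIV {{\<omega>. \<omega> j \<in> B} | j B. j < n}"

definition psi_mixing :: "(nat \<Rightarrow> bool) measure \<Rightarrow> bool" where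
  "psi_mixing Q \<longleftrightarrow> (\<exists>\<psi> :: nat \<Rightarrow> real. (\<forall>m. \<psi> m \<ge> 0) \<and> \<psi> \<longlonglongrightarrow> 0 \<and>
     (\<forall>m n E F. E \<in> coord_sigma n \<longrightarrow> F \<in> sets Omega0 \<longrightarrow>
        \<bar>measure Q (E \<inter> (T0 ^^ (n + m)) -` F) - measure Q E * measure Q F\<bar>
          \<le> \<psi> m * measure Q E * measure Q F))"

end

theory Submission
  imports Defs
begin


abbreviation M0 :: "nat measure" where "M0 \<equiv> measure_pmf letter_pmf"

interpretation Sq: sequence_space M0 
  by unfold_locales

lemma Pmeas_S: "Pmeas = Sq.S" by (simp add: Pmeas_def)

lemma space_Pmeas[simp]: "space Pmeas = UNIV"
  by (simp add: Pmeas_def space_PiM)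

lemma space_Omega0[simp]: "space Omega0 = UNIV"
  by (simp add: Omega0_def space_PiM)

lemma sets_M0[simp]: "sets M0 = UNIV" by simp

lemma prob_Pmeas: "prob_space Pmeas"
  by (simp add: Pmeas_S Sq.prob_space_axioms)

lemma Theta_meas[measurable]: "Theta \<in> measurable Pmeas Omega0"
  unfolding Omega0_def Theta_def theta_def
  apply (rule measurable_PiM_single')
   apply (simp_all add: Pmeas_def)
  done

lemma T0_meas[measurable]: "T0 \<in> measurable Omega0 Omega0"
  unfolding Omega0_def T0_def
  apply (rule measurable_PiM_single')
   apply (simp_all)
  done

lemma case_nat_meas[measurable]: "(\<lambda>(s, \<omega>). case_nat s \<omega>) \<in> measurable (M0 \<Otimes>\<^sub>M Pmeas) Pmeas"
  unfolding Pmeas_def by measurable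

lemma sf: "sigma_finite_measure Pmeas"
  using prob_Pmeas by (simp add: prob_space_imp_sigma_finite)

lemma nn_split_iter:
  assumes [measurable]: "f \<in> borel_measurable Pmeas"
  shows "(\<integral>\<^sup>+\<omega>. f \<omega> \<partial>Pmeas) = (\<integral>\<^sup>+d. \<integral>\<^sup>+\<omega>. f (case_nat d \<omega>) \<partial>Pmeas \<partial>M0)"
proof -
  interpret P: pair_sigma_finite M0 Pmeas unfolding Pmeas_def ..
  have "(\<integral>\<^sup>+\<omega>. f \<omega> \<partial>Pmeas) = (\<integral>\<^sup>+\<omega>. f \<omega> \<partial>(distr (M0 \<Otimes>\<^sub>M Pmeas) Pmeas (\<lambda>(s, \<omega>). case_nat s \<omega>)))"
    using Sq.PiM_iter by (simp add: Pmeas_def)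
  also have "\<dots> = (\<integral>\<^sup>+x. f (case x of (s, \<omega>) \<Rightarrow> case_nat s \<omega>) \<partial>(M0 \<Otimes>\<^sub>M Pmeas))"
    by (simp add: nn_integral_distr)
  also have "\<dots> = (\<integral>\<^sup>+d. \<integral>\<^sup>+\<omega>. f (case_nat d \<omega>) \<partial>Pmeas \<partial>M0)"
    using sigma_finite_measure.nn_integral_fst[OF sf, of "\<lambda>x. f (case x of (s, \<omega>) \<Rightarrow> case_nat s \<omega>)" M0] by simp
  finally show ?thesis .
qed

lemma comb_meas[measurable]: "(\<lambda>(\<omega>, \<omega>'). comb_seq i \<omega> \<omega>') \<in> measurable (Pmeas \<Otimes>\<^sub>M Pmeas) Pmeas"
  unfolding Pmeas_def by measurable

lemma nn_split_comb:
  assumes [measurable]: "f \<in> borel_measurable Pmeas"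
  shows "(\<integral>\<^sup>+\<omega>. f \<omega> \<partial>Pmeas) = (\<integral>\<^sup>+\<omega>. \<integral>\<^sup>+\<omega>'. f (comb_seq N \<omega> \<omega>') \<partial>Pmeas \<partial>Pmeas)"
proof -
  interpret P: pair_sigma_finite Pmeas Pmeas unfolding Pmeas_def ..
  have "(\<integral>\<^sup>+\<omega>. f \<omega> \<partial>Pmeas) = (\<integral>\<^sup>+\<omega>. f \<omega> \<partial>(distr (Pmeas \<Otimes>\<^sub>M Pmeas) Pmeas (\<lambda>(\<omega>, \<omega>'). comb_seq N \<omega> \<omega>')))"
    using Sq.PiM_comb_seq by (simp add: Pmeas_def)
  also have "\<dots> = (\<integral>\<^sup>+x. f (case x of (\<omega>, \<omega>') \<Rightarrow> comb_seq N \<omega> \<omega>') \<partial>(Pmeas \<Otimes>\<^sub>M Pmeas))"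
    by (simp add: nn_integral_distr)
  also have "\<dots> = (\<integral>\<^sup>+\<omega>. \<integral>\<^sup>+\<omega>'. f (comb_seq N \<omega> \<omega>') \<partial>Pmeas \<partial>Pmeas)"
    using sigma_finite_measure.nn_integral_fst[OF sf, of "\<lambda>x. f (case x of (\<omega>, \<omega>') \<Rightarrow> comb_seq N \<omega> \<omega>')" Pmeas] by simp
  finally show ?thesis .
qed


lemma case_nat_meas2[measurable]: "(\<lambda>\<omega>. case_nat d \<omega>) \<in> measurable Pmeas Pmeas"
  unfolding Pmeas_def by measurable

lemma comb_meas2[measurable]: "(\<lambda>\<omega>'. comb_seq N \<omega> \<omega>') \<in> measurable Pmeas Pmeas"
  unfolding Pmeas_def by (rule measurable_comb_seq'[where f="\<lambda>_. \<omega>" and g="\<lambda>x. x"]) (auto simp: space_PiM)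

lemma em_split_iter:
  assumes A[measurable]: "A \<in> sets Pmeas"
  shows "emeasure Pmeas A = (\<integral>\<^sup>+d. emeasure Pmeas {\<omega>. case_nat d \<omega> \<in> A} \<partial>M0)"
proof -
  have "emeasure Pmeas A = (\<integral>\<^sup>+\<omega>. indicator A \<omega> \<partial>Pmeas)" by simp
  also have "\<dots> = (\<integral>\<^sup>+d. \<integral>\<^sup>+\<omega>. indicator A (case_nat d \<omega>) \<partial>Pmeas \<partial>M0)"
    by (rule nn_split_iter) simp
  also have "\<dots> = (\<integral>\<^sup>+d. emeasure Pmeas {\<omega>. case_nat d \<omega> \<in> A} \<partial>M0)"
  proof (rule nn_integral_cong)
    fix d
    have m: "{\<omega>. case_nat d \<omega> \<in> A} \<in> sets Pmeas"
      using measurable_sets[OF case_nat_meas2 A, of d] by (simp add: vimage_def)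
    have "(\<integral>\<^sup>+\<omega>. indicator A (case_nat d \<omega>) \<partial>Pmeas) = (\<integral>\<^sup>+\<omega>. indicator {\<omega>. case_nat d \<omega> \<in> A} \<omega> \<partial>Pmeas)"
      by (auto intro!: nn_integral_cong split: split_indicator)
    then show "(\<integral>\<^sup>+\<omega>. indicator A (case_nat d \<omega>) \<partial>Pmeas) = emeasure Pmeas {\<omega>. case_nat d \<omega> \<in> A}"
      using m by simp
  qed
  finally show ?thesis .
qed

lemma em_split_comb:
  assumes A[measurable]: "A \<in> sets Pmeas"
  shows "emeasure Pmeas A = (\<integral>\<^sup>+\<omega>. emeasure Pmeas {\<omega>'. comb_seq N \<omega> \<omega>' \<in> A} \<partial>Pmeas)"
proof -
  have "emeasure Pmeas A = (\<integral>\<^sup>+\<omega>. indicator A \<omega> \<partial>Pmeas)" by simp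
  also have "\<dots> = (\<integral>\<^sup>+\<omega>. \<integral>\<^sup>+\<omega>'. indicator A (comb_seq N \<omega> \<omega>') \<partial>Pmeas \<partial>Pmeas)"
    by (rule nn_split_comb) simp
  also have "\<dots> = (\<integral>\<^sup>+\<omega>. emeasure Pmeas {\<omega>'. comb_seq N \<omega> \<omega>' \<in> A} \<partial>Pmeas)"
  proof (rule nn_integral_cong)
    fix \<omega>
    have m: "{\<omega>'. comb_seq N \<omega> \<omega>' \<in> A} \<in> sets Pmeas"
      using measurable_sets[OF comb_meas2 A, of N \<omega>] by (simp add: vimage_def)
    have "(\<integral>\<^sup>+\<omega>'. indicator A (comb_seq N \<omega> \<omega>') \<partial>Pmeas) = (\<integral>\<^sup>+\<omega>'. indicator {\<omega>'. comb_seq N \<omega> \<omega>' \<in> A} \<omega>' \<partial>Pmeas)"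
      by (auto intro!: nn_integral_cong split: split_indicator)
    then show "(\<integral>\<^sup>+\<omega>'. indicator A (comb_seq N \<omega> \<omega>') \<partial>Pmeas) = emeasure Pmeas {\<omega>'. comb_seq N \<omega> \<omega>' \<in> A}"
      using m by simp
  qed
  finally show ?thesis .
qed

definition sh :: "(nat \<Rightarrow> nat) \<Rightarrow> (nat \<Rightarrow> nat)" where "sh \<omega> = (\<lambda>j. \<omega> (Suc j))"

lemma sh_meas[measurable]: "sh \<in> measurable Pmeas Pmeas"
  unfolding sh_def Pmeas_def by (rule measurable_PiM_single') simp_all

lemma sh_pow: "(sh ^^ k) \<omega> = (\<lambda>j. \<omega> (j + k))"
  by (induction k arbitrary: \<omega>) (auto simp: sh_def)

lemma T0_pow: "(T0 ^^ k) \<eta> = (\<lambda>j. \<eta> (j + k))"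
  by (induction k arbitrary: \<eta>) (auto simp: T0_def)

lemma Theta_pow: "(T0 ^^ k) (Theta \<omega>) = Theta ((sh ^^ k) \<omega>)"
  by (simp add: T0_pow sh_pow Theta_def)

lemma sh_pow_comb: "(sh ^^ k) (comb_seq k \<omega> \<omega>') = \<omega>'"
  by (simp add: sh_pow comb_seq_add)

lemma T0_pow_meas[measurable]: "(T0 ^^ k) \<in> measurable Omega0 Omega0"
  by (induction k) auto

lemma distr_sh: "distr Pmeas Pmeas sh = Pmeas"
proof (rule measure_eqI)
  fix A assume A[measurable]: "A \<in> sets (distr Pmeas Pmeas sh)"
  then have A'[measurable]: "A \<in> sets Pmeas" by simp
  have s: "sh -` A \<in> sets Pmeas" using measurable_sets[OF sh_meas A'] by simp
  have "emeasure (distr Pmeas Pmeas sh) A = emeasure Pmeas (sh -` A)"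
    by (simp add: emeasure_distr)
  also have "\<dots> = (\<integral>\<^sup>+d. emeasure Pmeas {\<omega>. case_nat d \<omega> \<in> sh -` A} \<partial>M0)"
    by (rule em_split_iter[OF s])
  also have "\<dots> = (\<integral>\<^sup>+d. emeasure Pmeas A \<partial>M0)"
    by (rule nn_integral_cong) (simp add: sh_def)
  also have "\<dots> = emeasure Pmeas A" by simp
  finally show "emeasure (distr Pmeas Pmeas sh) A = emeasure Pmeas A" .
qed simp

lemma part_a: "distr P0 Omega0 T0 = P0"
proof -
  have "distr P0 Omega0 T0 = distr Pmeas Omega0 (T0 \<circ> Theta)"
    unfolding P0_def by (rule distr_distr) auto
  also have "T0 \<circ> Theta = Theta \<circ> sh" by (auto simp: T0_def Theta_def sh_def)
  also have "distr Pmeas Omega0 (Theta \<circ> sh) = distr (distr Pmeas Pmeas sh) Omega0 Theta"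
    by (rule distr_distr[symmetric]) auto
  also have "\<dots> = P0" by (simp add: distr_sh P0_def)
  finally show ?thesis .
qed


lemma pmf_letter_Suc: "pmf letter_pmf (Suc m) = (1/2) ^ Suc m"
  unfolding letter_pmf_def by (simp add: pmf_map_inj' pmf_geometric)

lemma pmf_letter_0: "pmf letter_pmf 0 = 0"
proof -
  have "Suc -` {0} = {}" by auto
  then show ?thesis unfolding letter_pmf_def by (simp add: pmf_map)
qed

lemma em_coord0: "emeasure Pmeas {\<omega>. \<omega> 0 = k} = pmf letter_pmf k"
proof -
  have "{\<omega>\<in>space Pmeas. \<omega> 0 = k} \<in> sets Pmeas" unfolding Pmeas_def by measurable
  then have s: "{\<omega>::nat\<Rightarrow>nat. \<omega> 0 = k} \<in> sets Pmeas" by simp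
  have "emeasure Pmeas {\<omega>. \<omega> 0 = k} = (\<integral>\<^sup>+d. emeasure Pmeas {\<omega>. case_nat d \<omega> \<in> {\<omega>. \<omega> 0 = k}} \<partial>M0)"
    by (rule em_split_iter[OF s])
  also have "\<dots> = (\<integral>\<^sup>+d. indicator {k} d \<partial>M0)"
    using prob_space.emeasure_space_1[OF prob_Pmeas]
    by (intro nn_integral_cong) (auto split: split_indicator)
  also have "\<dots> = pmf letter_pmf k" by (simp add: emeasure_pmf_single)
  finally show ?thesis .
qed

definition Ac :: "nat \<Rightarrow> (nat \<Rightarrow> nat) set" where
  "Ac n = {\<omega>. \<forall>j<n. \<omega> (Suc j) = \<omega> j + 1}"

lemma Ac_meas[measurable]: "Ac n \<in> sets Pmeas"
proof -
  have "{\<omega>\<in>space Pmeas. \<forall>j<n. \<omega> (Suc j) = \<omega> j + 1} \<in> sets Pmeas" unfolding Pmeas_def by measurable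
  then show ?thesis by (simp add: Ac_def)
qed

lemma Ac_val: "\<omega> \<in> Ac n \<Longrightarrow> \<omega> n = \<omega> 0 + n"
  by (induction n) (auto simp: Ac_def)

lemma Ac_ineq: "emeasure Pmeas (Ac (Suc n)) \<le> ennreal ((1/2) ^ Suc n) * emeasure Pmeas (Ac n)"
proof -
  have "emeasure Pmeas (Ac (Suc n)) = (\<integral>\<^sup>+\<omega>. emeasure Pmeas {\<omega>'. comb_seq (Suc n) \<omega> \<omega>' \<in> Ac (Suc n)} \<partial>Pmeas)"
    by (rule em_split_comb) simp
  also have "\<dots> = (\<integral>\<^sup>+\<omega>. indicator (Ac n) \<omega> * ennreal (pmf letter_pmf (\<omega> n + 1)) \<partial>Pmeas)"
  proof (rule nn_integral_cong)
    fix \<omega>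
    have key: "comb_seq (Suc n) \<omega> \<omega>' \<in> Ac (Suc n) \<longleftrightarrow> \<omega> \<in> Ac n \<and> \<omega>' 0 = \<omega> n + 1" for \<omega>'
    proof -
      let ?c = "comb_seq (Suc n) \<omega> \<omega>'"
      have s1: "?c \<in> Ac (Suc n) \<longleftrightarrow> (\<forall>j<n. ?c (Suc j) = ?c j + 1) \<and> ?c (Suc n) = ?c n + 1"
        unfolding Ac_def by (auto simp: less_Suc_eq)
      have s2: "(\<forall>j<n. ?c (Suc j) = ?c j + 1) \<longleftrightarrow> \<omega> \<in> Ac n"
        unfolding Ac_def by (simp add: comb_seq_less)
      have s3: "?c (Suc n) = \<omega>' 0" using comb_seq_add[of "Suc n" \<omega> \<omega>' 0] by simp
      have s4: "?c n = \<omega> n" by (simp add: comb_seq_less)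
      show ?thesis using s1 s2 s3 s4 by simp
    qed
    have "{\<omega>'. comb_seq (Suc n) \<omega> \<omega>' \<in> Ac (Suc n)} = (if \<omega> \<in> Ac n then {\<omega>'. \<omega>' 0 = \<omega> n + 1} else {})"
      using key by auto
    then show "emeasure Pmeas {\<omega>'. comb_seq (Suc n) \<omega> \<omega>' \<in> Ac (Suc n)} = indicator (Ac n) \<omega> * ennreal (pmf letter_pmf (\<omega> n + 1))"
      by (simp add: em_coord0 split: split_indicator)
  qed
  also have "\<dots> \<le> (\<integral>\<^sup>+\<omega>. ennreal ((1/2) ^ Suc n) * indicator (Ac n) \<omega> \<partial>Pmeas)"
  proof (rule nn_integral_mono)
    fix \<omega>
    show "indicator (Ac n) \<omega> * ennreal (pmf letter_pmf (\<omega> n + 1)) \<le> ennreal ((1/2) ^ Suc n) * indicator (Ac n) \<omega>"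
    proof (cases "\<omega> \<in> Ac n")
      case True
      then have "\<omega> n \<ge> n" using Ac_val[OF True] by simp
      then have "pmf letter_pmf (\<omega> n + 1) \<le> (1/2) ^ Suc n"
        by (simp add: pmf_letter_Suc power_decreasing)
      then show ?thesis using True by (simp add: ennreal_leI)
    qed simp
  qed
  also have "\<dots> = ennreal ((1/2) ^ Suc n) * emeasure Pmeas (Ac n)"
    by (simp add: nn_integral_cmult)
  finally show ?thesis .
qed

lemma cyl_meas[measurable]: "cyl \<omega> n \<in> sets Omega0"
proof -
  have "{\<omega>'\<in>space Omega0. \<forall>j<n. \<omega>' j = \<omega> j} \<in> sets Omega0" unfolding Omega0_def by measurable
  then show ?thesis by (simp add: cyl_def)
qed

lemma Theta_cyl: "Theta -` cyl (\<lambda>_. True) n = Ac n"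
  by (auto simp: cyl_def Ac_def Theta_def theta_def)

lemma P0_measure: "A \<in> sets Omega0 \<Longrightarrow> measure P0 A = measure Pmeas (Theta -` A)"
  unfolding P0_def by (simp add: measure_distr)

lemma part_c: "(\<lambda>n. measure P0 (cyl (\<lambda>_. True) (Suc n) \<inter> cyl (\<lambda>_. True) n)
                / measure P0 (cyl (\<lambda>_. True) n)) \<longlonglongrightarrow> 0"
proof (rule tendsto_sandwich[where f="\<lambda>_. 0" and h="\<lambda>n. (1/2) ^ Suc n"])
  interpret P: prob_space Pmeas by (rule prob_Pmeas)
  have eq: "measure P0 (cyl (\<lambda>_. True) (Suc n) \<inter> cyl (\<lambda>_. True) n) = measure Pmeas (Ac (Suc n))" for n
  proof -
    have "cyl (\<lambda>_. True) (Suc n) \<inter> cyl (\<lambda>_. True) n = cyl (\<lambda>_. True) (Suc n)"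
      by (auto simp: cyl_def)
    then show ?thesis by (simp add: P0_measure Theta_cyl)
  qed
  have eq2: "measure P0 (cyl (\<lambda>_. True) n) = measure Pmeas (Ac n)" for n
    by (simp add: P0_measure Theta_cyl)
  have ineq: "measure Pmeas (Ac (Suc n)) \<le> (1/2) ^ Suc n * measure Pmeas (Ac n)" for n
  proof -
    have "ennreal (measure Pmeas (Ac (Suc n))) \<le> ennreal ((1/2) ^ Suc n) * ennreal (measure Pmeas (Ac n))"
      using Ac_ineq[of n] by (simp add: P.emeasure_eq_measure)
    also have "\<dots> = ennreal ((1/2) ^ Suc n * measure Pmeas (Ac n))"
      by (rule ennreal_mult[symmetric]) simp_all
    finally show ?thesis by (simp add: ennreal_le_iff)
  qed
  show "\<forall>\<^sub>F n in sequentially. 0 \<le> measure P0 (cyl (\<lambda>_. True) (Suc n) \<inter> cyl (\<lambda>_. True) n) / measure P0 (cyl (\<lambda>_. True) n)"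
    by simp
  show "\<forall>\<^sub>F n in sequentially. measure P0 (cyl (\<lambda>_. True) (Suc n) \<inter> cyl (\<lambda>_. True) n) / measure P0 (cyl (\<lambda>_. True) n) \<le> (1/2) ^ Suc n"
  proof (rule always_eventually, rule allI)
    fix n
    show "measure P0 (cyl (\<lambda>_. True) (Suc n) \<inter> cyl (\<lambda>_. True) n) / measure P0 (cyl (\<lambda>_. True) n) \<le> (1/2) ^ Suc n"
    proof (cases "measure Pmeas (Ac n) = 0")
      case False
      then have "measure Pmeas (Ac n) > 0" using measure_nonneg[of Pmeas "Ac n"] by linarith
      then show ?thesis using ineq[of n] by (simp add: eq eq2 divide_le_eq)
    qed (simp add: eq eq2)
  qed
  show "(\<lambda>_. 0) \<longlonglongrightarrow> (0::real)" by simp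
  show "(\<lambda>n. (1/2::real) ^ Suc n) \<longlonglongrightarrow> 0"
    by (rule LIMSEQ_Suc[OF LIMSEQ_power_zero]) simp_all
qed


inductive_set mono_cl :: "'a set set \<Rightarrow> 'a set set" for G where
  base: "A \<in> G \<Longrightarrow> A \<in> mono_cl G"
| inc: "(\<And>i. A i \<in> mono_cl G) \<Longrightarrow> incseq A \<Longrightarrow> (\<Union>i. A i) \<in> mono_cl G"
| dec: "(\<And>i. A i \<in> mono_cl G) \<Longrightarrow> decseq A \<Longrightarrow> (\<Inter>i. A i) \<in> mono_cl G"

lemma mono_cl_sub:
  assumes "G \<subseteq> C"
    and "\<And>A. (\<And>i. A i \<in> C) \<Longrightarrow> incseq A \<Longrightarrow> (\<Union>i. A i) \<in> C"
    and "\<And>A. (\<And>i. A i \<in> C) \<Longrightarrow> decseq A \<Longrightarrow> (\<Inter>i. A i) \<in> C"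
  shows "mono_cl G \<subseteq> C"
proof
  fix x assume "x \<in> mono_cl G" then show "x \<in> C"
    by induction (use assms in blast)+
qed

lemma mono_cl_sigma:
  assumes alg: "algebra \<Omega> G"
  shows "sigma_sets \<Omega> G \<subseteq> mono_cl G"
proof -
  interpret algebra \<Omega> G by (rule alg)
  have pow: "A \<in> mono_cl G \<Longrightarrow> A \<subseteq> \<Omega>" for A
  proof (induction rule: mono_cl.induct)
    case (base A) then show ?case using sets_into_space by blast
  next
    case (inc A) then show ?case by blast
  next
    case (dec A) then show ?case by blast
  qed
  have compl: "A \<in> mono_cl G \<Longrightarrow> \<Omega> - A \<in> mono_cl G" for A
  proof (induction rule: mono_cl.induct)
    case (base A) then show ?case by (simp add: mono_cl.base compl_sets)
  next
    case (inc A)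
    have eq: "\<Omega> - (\<Union>i. A i) = (\<Inter>i. \<Omega> - A i)" by blast
    have mon: "decseq (\<lambda>i. \<Omega> - A i)" using \<open>incseq A\<close> by (auto simp: incseq_def decseq_def)
    show ?case unfolding eq by (rule mono_cl.dec[OF inc.IH mon])
  next
    case (dec A)
    have eq: "\<Omega> - (\<Inter>i. A i) = (\<Union>i. \<Omega> - A i)" by blast
    have mon: "incseq (\<lambda>i. \<Omega> - A i)" using \<open>decseq A\<close> by (auto simp: incseq_def decseq_def)
    show ?case unfolding eq by (rule mono_cl.inc[OF dec.IH mon])
  qed
  have un1: "A \<in> mono_cl G \<Longrightarrow> A \<union> B \<in> mono_cl G" if B: "B \<in> G" for A B
  proof (induction rule: mono_cl.induct)
    case (base A) then show ?case using B by (simp add: mono_cl.base Un)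
  next
    case (inc A)
    have eq: "(\<Union>i. A i) \<union> B = (\<Union>i. A i \<union> B)" by blast
    have mon: "incseq (\<lambda>i. A i \<union> B)" using \<open>incseq A\<close> by (auto simp: incseq_def)
    show ?case unfolding eq by (rule mono_cl.inc[OF inc.IH mon])
  next
    case (dec A)
    have eq: "(\<Inter>i. A i) \<union> B = (\<Inter>i. A i \<union> B)" by blast
    have mon: "decseq (\<lambda>i. A i \<union> B)" using \<open>decseq A\<close> by (auto simp: decseq_def)
    show ?case unfolding eq by (rule mono_cl.dec[OF dec.IH mon])
  qed
  have un2: "B \<in> mono_cl G \<Longrightarrow> A \<union> B \<in> mono_cl G" if A: "A \<in> mono_cl G" for A B
  proof (induction rule: mono_cl.induct)
    case (base B) then show ?case using un1[OF base A] by (simp add: Un_commute)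
  next
    case (inc B)
    have eq: "A \<union> (\<Union>i. B i) = (\<Union>i. A \<union> B i)" by blast
    have mon: "incseq (\<lambda>i. A \<union> B i)" using \<open>incseq B\<close> by (auto simp: incseq_def)
    show ?case unfolding eq by (rule mono_cl.inc[OF inc.IH mon])
  next
    case (dec B)
    have eq: "A \<union> (\<Inter>i. B i) = (\<Inter>i. A \<union> B i)" by blast
    have mon: "decseq (\<lambda>i. A \<union> B i)" using \<open>decseq B\<close> by (auto simp: decseq_def)
    show ?case unfolding eq by (rule mono_cl.dec[OF dec.IH mon])
  qed
  have emp: "{} \<in> mono_cl G" by (simp add: mono_cl.base)
  have fin: "(\<Union>i\<le>n. A i) \<in> mono_cl G" if "\<And>i. A i \<in> mono_cl G" for A :: "nat \<Rightarrow> 'a set" and n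
  proof (induction n)
    case 0 then show ?case using that by simp
  next
    case (Suc n)
    have "(\<Union>i\<le>Suc n. A i) = (\<Union>i\<le>n. A i) \<union> A (Suc n)" by (auto simp: atMost_Suc)
    then show ?case using un2[OF Suc that] by simp
  qed
  have sa: "sigma_algebra \<Omega> (mono_cl G)"
    unfolding sigma_algebra_iff2
  proof (intro conjI ballI allI impI)
    show "mono_cl G \<subseteq> Pow \<Omega>" using pow by blast
    show "{} \<in> mono_cl G" by (rule emp)
    show "\<Omega> - s \<in> mono_cl G" if "s \<in> mono_cl G" for s using compl that by blast
    fix A :: "nat \<Rightarrow> 'a set" assume "range A \<subseteq> mono_cl G"
    then have A: "\<And>i. A i \<in> mono_cl G" by blast
    have "(\<Union>i. A i) = (\<Union>n. \<Union>i\<le>n. A i)" by blast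
    moreover have "incseq (\<lambda>n. \<Union>i\<le>n. A i)" by (force simp: incseq_def)
    ultimately show "(\<Union>i. A i) \<in> mono_cl G" using fin[OF A] by (simp add: mono_cl.inc)
  qed
  show ?thesis
    using sigma_algebra.sigma_sets_subset[OF sa] mono_cl.base by blast
qed


definition dep :: "nat \<Rightarrow> (nat \<Rightarrow> bool) set \<Rightarrow> bool" where
  "dep k F \<longleftrightarrow> (\<forall>\<eta> \<eta>'. (\<forall>j<k. \<eta> j = \<eta>' j) \<longrightarrow> (\<eta> \<in> F \<longleftrightarrow> \<eta>' \<in> F))"

definition pre :: "nat \<Rightarrow> (nat \<Rightarrow> bool) set \<Rightarrow> (nat \<Rightarrow> nat) set" where
  "pre c F = {\<omega>. Theta (case_nat c \<omega>) \<in> F}"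

definition mu :: "nat \<Rightarrow> (nat \<Rightarrow> bool) set \<Rightarrow> ennreal" where
  "mu c F = emeasure Pmeas (pre c F)"

lemma pre_meas[measurable]:
  assumes F: "F \<in> sets Omega0" shows "pre c F \<in> sets Pmeas"
proof -
  have m: "(\<lambda>\<omega>. Theta (case_nat c \<omega>)) \<in> measurable Pmeas Omega0"
    using measurable_compose[OF case_nat_meas2 Theta_meas] by (simp add: comp_def)
  have "(\<lambda>\<omega>. Theta (case_nat c \<omega>)) -` F \<inter> space Pmeas = pre c F" by (auto simp: pre_def)
  with measurable_sets[OF m F] show ?thesis by simp
qed

lemma Theta_case: "Theta (case_nat c (case_nat d \<omega>)) = case_nat (d = Suc c) (Theta (case_nat d \<omega>))"
  by (rule ext, case_tac x) (simp_all add: Theta_def theta_def)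

definition slice :: "bool \<Rightarrow> (nat \<Rightarrow> bool) set \<Rightarrow> (nat \<Rightarrow> bool) set" where
  "slice b F = {\<eta>. case_nat b \<eta> \<in> F}"

lemma slice_meas[measurable]:
  assumes F: "F \<in> sets Omega0" shows "slice b F \<in> sets Omega0"
proof -
  have m: "(\<lambda>\<eta>. case_nat b \<eta>) \<in> measurable Omega0 Omega0" unfolding Omega0_def by measurable
  have "(\<lambda>\<eta>. case_nat b \<eta>) -` F \<inter> space Omega0 = slice b F" by (auto simp: slice_def)
  with measurable_sets[OF m F] show ?thesis by simp
qed

lemma mu_rec: assumes F: "F \<in> sets Omega0" shows "mu c F = (\<integral>\<^sup>+d. mu d (slice (d = Suc c) F) \<partial>M0)"
  unfolding mu_def
  by (subst em_split_iter[OF pre_meas[OF F]]) (simp add: pre_def slice_def Theta_case)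

lemma nn_pmf_split: "(\<integral>\<^sup>+d. f d \<partial>M0) = (\<integral>\<^sup>+d. f d * indicator (- {v}) d \<partial>M0) + ennreal (pmf letter_pmf v) * f v"
proof -
  have "(\<integral>\<^sup>+d. f d \<partial>M0) = (\<integral>\<^sup>+d. f d * indicator (- {v}) d + f d * indicator {v} d \<partial>M0)"
    by (rule nn_integral_cong) (simp split: split_indicator)
  also have "\<dots> = (\<integral>\<^sup>+d. f d * indicator (- {v}) d \<partial>M0) + (\<integral>\<^sup>+d. f d * indicator {v} d \<partial>M0)"
    by (rule nn_integral_add) simp_all
  also have "(\<integral>\<^sup>+d. f d * indicator {v} d \<partial>M0) = ennreal (pmf letter_pmf v) * f v"
    by (simp add: emeasure_pmf_single mult.commute)
  finally show ?thesis .
qed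

lemma nn_pmf_single_le: "ennreal (pmf letter_pmf v) * f v \<le> (\<integral>\<^sup>+d. f d \<partial>M0)"
  using nn_pmf_split[of f v] by (metis add.commute le_iff_add)

lemma pmf_le: "c' \<le> c \<Longrightarrow> 1 \<le> c' \<Longrightarrow> pmf letter_pmf c \<le> pmf letter_pmf c'"
  by (cases c; cases c') (auto simp: pmf_letter_Suc power_decreasing)

lemma pmf_small: "1 \<le> c' \<Longrightarrow> ennreal (pmf letter_pmf (Suc c')) * 2 \<le> ennreal (pmf letter_pmf 1)"
proof -
  assume "1 \<le> c'"
  then have "(1/2::real) ^ c' \<le> (1/2) ^ 1" by (intro power_decreasing) auto
  then have r: "pmf letter_pmf (Suc c') * 2 \<le> pmf letter_pmf 1"
    using pmf_letter_Suc[of c'] pmf_letter_Suc[of 0] by simp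
  have "ennreal (pmf letter_pmf (Suc c')) * 2 = ennreal (pmf letter_pmf (Suc c') * 2)"
    by (simp add: ennreal_mult)
  with r show ?thesis by (simp add: ennreal_leI)
qed

lemma dep0: "dep 0 F \<Longrightarrow> F = {} \<or> F = UNIV"
  unfolding dep_def by blast

lemma dep_slice: "dep (Suc k) F \<Longrightarrow> dep k (slice b F)"
  unfolding dep_def slice_def
proof (intro allI impI)
  fix \<eta> \<eta>' :: "nat \<Rightarrow> bool"
  assume d: "\<forall>\<eta> \<eta>'. (\<forall>j<Suc k. \<eta> j = \<eta>' j) \<longrightarrow> (\<eta> \<in> F) = (\<eta>' \<in> F)" and a: "\<forall>j<k. \<eta> j = \<eta>' j"
  have "\<forall>j<Suc k. case_nat b \<eta> j = case_nat b \<eta>' j"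
    using a by (auto simp: less_Suc_eq_0_disj)
  then show "(\<eta> \<in> {\<eta>. case_nat b \<eta> \<in> F}) = (\<eta>' \<in> {\<eta>. case_nat b \<eta> \<in> F})" using d by auto
qed

lemma mu_le1: "mu c F \<le> 1"
  unfolding mu_def using prob_space.emeasure_le_1[OF prob_Pmeas] .

lemma dom_fin: "F \<in> sets Omega0 \<Longrightarrow> dep k F \<Longrightarrow> 1 \<le> c' \<Longrightarrow> c' \<le> c \<Longrightarrow> mu c F \<le> 2 * mu c' F"
proof (induction k arbitrary: F c c')
  case 0
  from dep0[OF 0(2)] have "mu c F = mu c' F"
    by (elim disjE) (simp_all add: mu_def pre_def)
  then show ?case by (simp add: mult_2)
next
  case (Suc k)
  define f0 where "f0 d = mu d (slice False F)" for d
  define f1 where "f1 d = mu d (slice True F)" for d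
  have F0: "slice False F \<in> sets Omega0" "dep k (slice False F)" using Suc.prems dep_slice by auto
  have F1: "slice True F \<in> sets Omega0" "dep k (slice True F)" using Suc.prems dep_slice by auto
  have IH0: "1 \<le> b \<Longrightarrow> b \<le> a \<Longrightarrow> f0 a \<le> 2 * f0 b" for a b
    unfolding f0_def using Suc.IH[OF F0] by blast
  have IH1: "1 \<le> b \<Longrightarrow> b \<le> a \<Longrightarrow> f1 a \<le> 2 * f1 b" for a b
    unfolding f1_def using Suc.IH[OF F1] by blast
  define I where "I v = (\<integral>\<^sup>+d. f0 d * indicator (- {v}) d \<partial>M0)" for v
  have rec: "mu x F = I (Suc x) + ennreal (pmf letter_pmf (Suc x)) * f1 (Suc x)" for x
  proof -
    have "mu x F = (\<integral>\<^sup>+d. mu d (slice (d = Suc x) F) \<partial>M0)" by (rule mu_rec[OF Suc.prems(1)])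
    also have "\<dots> = (\<integral>\<^sup>+d. mu d (slice (d = Suc x) F) * indicator (- {Suc x}) d \<partial>M0) + ennreal (pmf letter_pmf (Suc x)) * f1 (Suc x)"
      by (subst nn_pmf_split[where v="Suc x"]) (simp add: f1_def)
    also have "(\<integral>\<^sup>+d. mu d (slice (d = Suc x) F) * indicator (- {Suc x}) d \<partial>M0) = I (Suc x)"
      unfolding I_def f0_def by (rule nn_integral_cong) (simp split: split_indicator)
    finally show ?thesis .
  qed
  have tot: "(\<integral>\<^sup>+d. f0 d \<partial>M0) = I v + ennreal (pmf letter_pmf v) * f0 v" for v
    unfolding I_def by (rule nn_pmf_split)
  have c1: "I (Suc c) \<le> (\<integral>\<^sup>+d. f0 d \<partial>M0)" using tot[of "Suc c"] by (metis le_iff_add)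
  have c2: "ennreal (pmf letter_pmf 1) * f0 1 \<le> I (Suc c')"
  proof -
    have "ennreal (pmf letter_pmf 1) * f0 1 = (\<integral>\<^sup>+d. f0 d * indicator {1} d \<partial>M0)"
      by (simp add: emeasure_pmf_single mult.commute)
    also have "\<dots> \<le> I (Suc c')" unfolding I_def
      using Suc.prems(3) by (intro nn_integral_mono) (auto split: split_indicator)
    finally show ?thesis .
  qed
  have c3: "ennreal (pmf letter_pmf (Suc c')) * f0 (Suc c') \<le> ennreal (pmf letter_pmf 1) * f0 1"
  proof -
    have "ennreal (pmf letter_pmf (Suc c')) * f0 (Suc c') \<le> ennreal (pmf letter_pmf (Suc c')) * (2 * f0 1)"
      using IH0[of 1 "Suc c'"] by (intro mult_left_mono) auto
    also have "\<dots> = (ennreal (pmf letter_pmf (Suc c')) * 2) * f0 1" by (simp add: mult.assoc)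
    also have "\<dots> \<le> ennreal (pmf letter_pmf 1) * f0 1"
      using pmf_small[OF Suc.prems(3)] by (intro mult_right_mono) auto
    finally show ?thesis .
  qed
  have c4: "ennreal (pmf letter_pmf (Suc c)) * f1 (Suc c) \<le> ennreal (pmf letter_pmf (Suc c')) * (2 * f1 (Suc c'))"
    using IH1[of "Suc c'" "Suc c"] pmf_le[of "Suc c'" "Suc c"] Suc.prems(3,4)
    by (intro mult_mono) (auto simp: ennreal_leI)
  have "mu c F = I (Suc c) + ennreal (pmf letter_pmf (Suc c)) * f1 (Suc c)" by (rule rec)
  also have "\<dots> \<le> (I (Suc c') + ennreal (pmf letter_pmf (Suc c')) * f0 (Suc c')) + ennreal (pmf letter_pmf (Suc c')) * (2 * f1 (Suc c'))"
    using c1 c4 tot[of "Suc c'"] by (intro add_mono) auto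
  also have "\<dots> \<le> (I (Suc c') + I (Suc c')) + ennreal (pmf letter_pmf (Suc c')) * (2 * f1 (Suc c'))"
    using c2 c3 by (intro add_mono) auto
  also have "\<dots> = 2 * mu c' F"
    by (simp only: rec[of c'] mult_2 distrib_left add_ac)
  finally show ?case .
qed


lemma dep_mono: "dep k F \<Longrightarrow> k \<le> k' \<Longrightarrow> dep k' F"
  unfolding dep_def by auto

definition Galg :: "(nat \<Rightarrow> bool) set set" where
  "Galg = {F \<in> sets Omega0. \<exists>k. dep k F}"

lemma Galg_alg: "algebra UNIV Galg"
  unfolding algebra_iff_Un
proof (intro conjI ballI)
  show "Galg \<subseteq> Pow UNIV" by simp
  show "{} \<in> Galg" unfolding Galg_def dep_def by auto
  fix a assume a: "a \<in> Galg"
  then obtain k where k: "dep k a" "a \<in> sets Omega0" unfolding Galg_def by auto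
  have "UNIV - a \<in> sets Omega0" using k(2) sets.compl_sets[of a Omega0] by simp
  moreover have "dep k (UNIV - a)" using k(1) unfolding dep_def by blast
  ultimately show "UNIV - a \<in> Galg" unfolding Galg_def by blast
  fix b assume b: "b \<in> Galg"
  then obtain k' where k': "dep k' b" "b \<in> sets Omega0" unfolding Galg_def by auto
  have "dep (max k k') a" "dep (max k k') b" using dep_mono k(1) k'(1) by auto
  then have "dep (max k k') (a \<union> b)" unfolding dep_def by blast
  then show "a \<union> b \<in> Galg" using k(2) k'(2) unfolding Galg_def by blast
qed

lemma coord_set_meas: "{\<eta>::nat\<Rightarrow>bool. \<eta> j \<in> B} \<in> sets Omega0"
proof -
  have "{\<eta>\<in>space Omega0. \<eta> j \<in> B} \<in> sets Omega0" unfolding Omega0_def by measurable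
  then show ?thesis by simp
qed

lemma sets_Omega0_Galg: "sets Omega0 \<subseteq> sigma_sets UNIV Galg"
proof -
  have "sets Omega0 = sigma_sets UNIV {{f::nat\<Rightarrow>bool. f i \<in> A} | i A. True}"
    unfolding Omega0_def by (simp add: sets_PiM_single)
  also have "\<dots> \<subseteq> sigma_sets UNIV Galg"
  proof (rule sigma_sets_mono')
    show "{{f::nat\<Rightarrow>bool. f i \<in> A} | i A. True} \<subseteq> Galg"
    proof safe
      fix i A
      have "dep (Suc i) {f::nat\<Rightarrow>bool. f i \<in> A}" unfolding dep_def by auto
      then show "{f::nat\<Rightarrow>bool. f i \<in> A} \<in> Galg" unfolding Galg_def using coord_set_meas by blast
    qed
  qed
  finally show ?thesis .
qed

lemma pre_Union: "pre c (\<Union>i. A i) = (\<Union>i. pre c (A i))" by (auto simp: pre_def)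
lemma pre_Inter: "pre c (\<Inter>i. A i) = (\<Inter>i. pre c (A i))" by (auto simp: pre_def)
lemma pre_mono: "A \<subseteq> B \<Longrightarrow> pre c A \<subseteq> pre c B" by (auto simp: pre_def)

lemma mu_mono: "A \<subseteq> B \<Longrightarrow> B \<in> sets Omega0 \<Longrightarrow> mu c A \<le> mu c B"
  unfolding mu_def by (intro emeasure_mono pre_mono pre_meas)

lemma dom_all:
  assumes F: "F \<in> sets Omega0" and c: "1 \<le> c'" "c' \<le> c"
  shows "mu c F \<le> 2 * mu c' F"
proof -
  interpret P: prob_space Pmeas by (rule prob_Pmeas)
  let ?C = "{F \<in> sets Omega0. mu c F \<le> 2 * mu c' F}"
  have "mono_cl Galg \<subseteq> ?C"
  proof (rule mono_cl_sub)
    show "Galg \<subseteq> ?C" unfolding Galg_def using dom_fin c by blast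
  next
    fix A :: "nat \<Rightarrow> (nat \<Rightarrow> bool) set" assume A: "\<And>i. A i \<in> ?C" and inc: "incseq A"
    have As: "\<And>i. A i \<in> sets Omega0" using A by blast
    have U: "(\<Union>i. A i) \<in> sets Omega0" using As by blast
    have lim: "(\<lambda>i. mu c (A i)) \<longlonglongrightarrow> mu c (\<Union>i. A i)"
      unfolding mu_def pre_Union
      by (rule Lim_emeasure_incseq) (use As inc in \<open>auto simp: incseq_def intro!: pre_mono\<close>)
    have "mu c (A i) \<le> 2 * mu c' (\<Union>i. A i)" for i
    proof -
      have "mu c (A i) \<le> 2 * mu c' (A i)" using A by blast
      also have "\<dots> \<le> 2 * mu c' (\<Union>i. A i)" using U by (intro mult_left_mono mu_mono) auto
      finally show ?thesis .
    qed
    then have "mu c (\<Union>i. A i) \<le> 2 * mu c' (\<Union>i. A i)"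
      by (intro LIMSEQ_le_const2[OF lim]) auto
    then show "(\<Union>i. A i) \<in> ?C" using U by blast
  next
    fix A :: "nat \<Rightarrow> (nat \<Rightarrow> bool) set" assume A: "\<And>i. A i \<in> ?C" and dec: "decseq A"
    have As: "\<And>i. A i \<in> sets Omega0" using A by blast
    have U: "(\<Inter>i. A i) \<in> sets Omega0" using As by blast
    have lim: "(\<lambda>i. mu c' (A i)) \<longlonglongrightarrow> mu c' (\<Inter>i. A i)"
      unfolding mu_def pre_Inter
      by (rule Lim_emeasure_decseq)
         (use As dec in \<open>auto simp: decseq_def intro!: pre_mono P.emeasure_finite\<close>)
    have lim2: "(\<lambda>i. 2 * mu c' (A i)) \<longlonglongrightarrow> 2 * mu c' (\<Inter>i. A i)"
      by (rule ennreal_tendsto_cmult[OF _ lim]) simp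
    have "mu c (\<Inter>i. A i) \<le> 2 * mu c' (A i)" for i
    proof -
      have "mu c (\<Inter>i. A i) \<le> mu c (A i)" using As by (intro mu_mono) auto
      also have "\<dots> \<le> 2 * mu c' (A i)" using A by blast
      finally show ?thesis .
    qed
    then have "mu c (\<Inter>i. A i) \<le> 2 * mu c' (\<Inter>i. A i)"
      by (intro LIMSEQ_le_const[OF lim2]) auto
    then show "(\<Inter>i. A i) \<in> ?C" using U by blast
  qed
  moreover have "sigma_sets UNIV Galg \<subseteq> mono_cl Galg" by (rule mono_cl_sigma[OF Galg_alg])
  ultimately show ?thesis using F sets_Omega0_Galg by blast
qed

lemma Theta_pre_meas: "F \<in> sets Omega0 \<Longrightarrow> Theta -` F \<in> sets Pmeas"
  using measurable_sets[OF Theta_meas] by simp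

lemma em_Theta: "F \<in> sets Omega0 \<Longrightarrow> emeasure Pmeas (Theta -` F) = (\<integral>\<^sup>+d. mu d F \<partial>M0)"
  unfolding mu_def pre_def
  by (subst em_split_iter[OF Theta_pre_meas]) (auto simp: vimage_def)

lemma dom4: assumes F: "F \<in> sets Omega0" and d: "1 \<le> d"
  shows "mu d F \<le> 4 * emeasure Pmeas (Theta -` F)"
proof -
  have p1: "pmf letter_pmf (Suc 0) = 1/2" using pmf_letter_Suc[of 0] by simp
  have "mu d F \<le> 2 * mu 1 F" by (rule dom_all[OF F]) (use d in auto)
  also have "\<dots> = 4 * (ennreal (pmf letter_pmf 1) * mu 1 F)"
  proof -
    have "ennreal (4 * (1/2)) = ennreal 4 * ennreal (1/2)" by (rule ennreal_mult) auto
    then have h: "(4::ennreal) * ennreal (1/2) = 2" by simp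
    show ?thesis by (simp only: One_nat_def p1 mult.assoc[symmetric] h)
  qed
  also have "\<dots> \<le> 4 * (\<integral>\<^sup>+d. mu d F \<partial>M0)"
    by (intro mult_left_mono nn_pmf_single_le) auto
  also have "\<dots> = 4 * emeasure Pmeas (Theta -` F)" by (simp add: em_Theta[OF F])
  finally show ?thesis .
qed


lemma sh_pow_meas[measurable]: "(sh ^^ k) \<in> measurable Pmeas Pmeas"
  by (induction k) auto

lemma coord_sigma_dep: "E \<in> coord_sigma n \<Longrightarrow> dep n E"
  unfolding coord_sigma_def
proof (induction rule: sigma_sets.induct)
  case (Basic a)
  then obtain j B where "a = {\<omega>. \<omega> j \<in> B}" "j < n" by blast
  then show ?case unfolding dep_def by auto
next
  case Empty then show ?case unfolding dep_def by auto
next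
  case (Compl a) then show ?case unfolding dep_def by blast
next
  case (Union A) then show ?case unfolding dep_def by blast
qed

lemma coord_sigma_sets: "E \<in> coord_sigma n \<Longrightarrow> E \<in> sets Omega0"
proof -
  assume E: "E \<in> coord_sigma n"
  have "sigma_sets (space Omega0) {{\<omega>. \<omega> j \<in> B} | j B. j < n} \<subseteq> sets Omega0"
    by (rule sets.sigma_sets_subset) (auto intro: coord_set_meas)
  then show ?thesis using E unfolding coord_sigma_def by auto
qed

lemma depX: "dep n E \<Longrightarrow> (\<And>j. j \<le> n \<Longrightarrow> \<omega> j = \<omega>'' j) \<Longrightarrow> (Theta \<omega> \<in> E \<longleftrightarrow> Theta \<omega>'' \<in> E)"
  unfolding dep_def
proof -
  assume d: "\<forall>\<eta> \<eta>'. (\<forall>j<n. \<eta> j = \<eta>' j) \<longrightarrow> (\<eta> \<in> E) = (\<eta>' \<in> E)" and a: "\<And>j. j \<le> n \<Longrightarrow> \<omega> j = \<omega>'' j"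
  have "\<forall>j<n. Theta \<omega> j = Theta \<omega>'' j" using a by (auto simp: Theta_def)
  then show ?thesis using d by blast
qed

lemma comb_emeas_meas:
  assumes A: "A \<in> sets Pmeas"
  shows "(\<lambda>\<omega>. emeasure Pmeas {\<omega>'. comb_seq N \<omega> \<omega>' \<in> A}) \<in> borel_measurable Pmeas"
proof -
  let ?Q = "(\<lambda>(\<omega>, \<omega>'). comb_seq N \<omega> \<omega>') -` A \<inter> space (Pmeas \<Otimes>\<^sub>M Pmeas)"
  have Qm: "?Q \<in> sets (Pmeas \<Otimes>\<^sub>M Pmeas)" by (rule measurable_sets[OF comb_meas A])
  have "Pair \<omega> -` ?Q = {\<omega>'. comb_seq N \<omega> \<omega>' \<in> A}" for \<omega> by (auto simp: space_pair_measure)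
  with sigma_finite_measure.measurable_emeasure_Pair[OF sf Qm] show ?thesis by simp
qed

lemma sh_pre_meas: "Y \<in> sets Pmeas \<Longrightarrow> (sh ^^ k) -` Y \<in> sets Pmeas"
  using measurable_sets[OF sh_pow_meas] by simp

lemma mix_indep:
  assumes E: "E \<in> coord_sigma n" and F: "F \<in> sets Omega0" and N: "n < N"
  shows "emeasure Pmeas (Theta -` E \<inter> (sh ^^ N) -` (Theta -` F)) = emeasure Pmeas (Theta -` F) * emeasure Pmeas (Theta -` E)"
proof -
  let ?X = "Theta -` E" and ?Y = "Theta -` F"
  have Xm: "?X \<in> sets Pmeas" using Theta_pre_meas coord_sigma_sets E by blast
  have Ym: "?Y \<in> sets Pmeas" using Theta_pre_meas F by blast
  have Zm: "?X \<inter> (sh ^^ N) -` ?Y \<in> sets Pmeas" using Xm Ym sh_pre_meas by blast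
  have dE: "dep n E" using coord_sigma_dep E by blast
  have "emeasure Pmeas (?X \<inter> (sh ^^ N) -` ?Y) = (\<integral>\<^sup>+\<omega>. emeasure Pmeas {\<omega>'. comb_seq N \<omega> \<omega>' \<in> ?X \<inter> (sh ^^ N) -` ?Y} \<partial>Pmeas)"
    by (rule em_split_comb[OF Zm])
  also have "\<dots> = (\<integral>\<^sup>+\<omega>. emeasure Pmeas ?Y * indicator ?X \<omega> \<partial>Pmeas)"
  proof (rule nn_integral_cong)
    fix \<omega>
    have h: "Theta (comb_seq N \<omega> \<omega>') \<in> E \<longleftrightarrow> Theta \<omega> \<in> E" for \<omega>'
      by (rule depX[OF dE]) (use N in \<open>simp add: comb_seq_less\<close>)
    have "{\<omega>'. comb_seq N \<omega> \<omega>' \<in> ?X \<inter> (sh ^^ N) -` ?Y} = (if \<omega> \<in> ?X then ?Y else {})"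
      by (auto simp: h sh_pow_comb)
    then show "emeasure Pmeas {\<omega>'. comb_seq N \<omega> \<omega>' \<in> ?X \<inter> (sh ^^ N) -` ?Y} = emeasure Pmeas ?Y * indicator ?X \<omega>"
      by (simp split: split_indicator)
  qed
  also have "\<dots> = emeasure Pmeas ?Y * emeasure Pmeas ?X"
    by (rule nn_integral_cmult_indicator[OF Xm])
  finally show ?thesis .
qed

lemma AE_pos: "AE d in M0. 1 \<le> d"
proof -
  have "\<forall>y\<in>set_pmf letter_pmf. 1 \<le> y"
  proof
    fix y assume "y \<in> set_pmf letter_pmf"
    then have "pmf letter_pmf y \<noteq> 0" by (simp add: set_pmf_iff)
    then show "1 \<le> y" using pmf_letter_0 by (cases y) auto
  qed
  then show ?thesis by (simp add: AE_measure_pmf_iff)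
qed

lemma mix_0:
  assumes E: "E \<in> coord_sigma n" and F: "F \<in> sets Omega0"
  shows "emeasure Pmeas (Theta -` E \<inter> (sh ^^ n) -` (Theta -` F)) \<le> 4 * emeasure Pmeas (Theta -` F) * emeasure Pmeas (Theta -` E)"
proof -
  let ?X = "Theta -` E" and ?Y = "Theta -` F"
  let ?Z = "?X \<inter> (sh ^^ n) -` ?Y"
  let ?eY = "emeasure Pmeas ?Y"
  have Xm: "?X \<in> sets Pmeas" using Theta_pre_meas coord_sigma_sets E by blast
  have Ym: "?Y \<in> sets Pmeas" using Theta_pre_meas F by blast
  have Zm: "?Z \<in> sets Pmeas" using Xm Ym sh_pre_meas by blast
  have dE: "dep n E" using coord_sigma_dep E by blast
  define G where "G \<omega> = {d. comb_seq n \<omega> (\<lambda>_. d) \<in> ?X}" for \<omega>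
  have key: "comb_seq n \<omega> \<omega>' \<in> ?X \<longleftrightarrow> \<omega>' 0 \<in> G \<omega>" for \<omega> \<omega>'
  proof -
    have agree: "comb_seq n \<omega> \<omega>' j = comb_seq n \<omega> (\<lambda>_. \<omega>' 0) j" if "j \<le> n" for j
      using that by (cases "j < n") (simp_all add: comb_seq_def)
    have "Theta (comb_seq n \<omega> \<omega>') \<in> E \<longleftrightarrow> Theta (comb_seq n \<omega> (\<lambda>_. \<omega>' 0)) \<in> E"
      by (rule depX[OF dE agree])
    then show ?thesis unfolding G_def by simp
  qed
  have SXm: "{\<omega>'. comb_seq n \<omega> \<omega>' \<in> A} \<in> sets Pmeas" if "A \<in> sets Pmeas" for A \<omega>
    using measurable_sets[OF comb_meas2 that, of n \<omega>] by (simp add: vimage_def)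
  have innerX: "emeasure Pmeas {\<omega>'. comb_seq n \<omega> \<omega>' \<in> ?X} = emeasure M0 (G \<omega>)" for \<omega>
  proof -
    have "emeasure Pmeas {\<omega>'. comb_seq n \<omega> \<omega>' \<in> ?X} = (\<integral>\<^sup>+d. emeasure Pmeas {\<omega>''. case_nat d \<omega>'' \<in> {\<omega>'. comb_seq n \<omega> \<omega>' \<in> ?X}} \<partial>M0)"
      by (rule em_split_iter[OF SXm[OF Xm]])
    also have "\<dots> = (\<integral>\<^sup>+d. indicator (G \<omega>) d \<partial>M0)"
    proof (rule nn_integral_cong)
      fix d
      have "case_nat d \<omega>'' \<in> {\<omega>'. comb_seq n \<omega> \<omega>' \<in> ?X} \<longleftrightarrow> d \<in> G \<omega>" for \<omega>''
        using key[of \<omega> "case_nat d \<omega>''"] by (simp only: mem_Collect_eq nat.case(1))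
      then have "{\<omega>''. case_nat d \<omega>'' \<in> {\<omega>'. comb_seq n \<omega> \<omega>' \<in> ?X}} = (if d \<in> G \<omega> then UNIV else {})"
        by auto
      then show "emeasure Pmeas {\<omega>''. case_nat d \<omega>'' \<in> {\<omega>'. comb_seq n \<omega> \<omega>' \<in> ?X}} = indicator (G \<omega>) d"
        using prob_space.emeasure_space_1[OF prob_Pmeas] by (simp split: split_indicator)
    qed
    also have "\<dots> = emeasure M0 (G \<omega>)" by simp
    finally show ?thesis .
  qed
  have innerZ: "emeasure Pmeas {\<omega>'. comb_seq n \<omega> \<omega>' \<in> ?Z} \<le> 4 * ?eY * emeasure M0 (G \<omega>)" for \<omega>
  proof -
    have "emeasure Pmeas {\<omega>'. comb_seq n \<omega> \<omega>' \<in> ?Z} = (\<integral>\<^sup>+d. emeasure Pmeas {\<omega>''. case_nat d \<omega>'' \<in> {\<omega>'. comb_seq n \<omega> \<omega>' \<in> ?Z}} \<partial>M0)"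
      by (rule em_split_iter[OF SXm[OF Zm]])
    also have "\<dots> = (\<integral>\<^sup>+d. indicator (G \<omega>) d * mu d F \<partial>M0)"
    proof (rule nn_integral_cong)
      fix d
      have "case_nat d \<omega>'' \<in> {\<omega>'. comb_seq n \<omega> \<omega>' \<in> ?Z} \<longleftrightarrow> d \<in> G \<omega> \<and> \<omega>'' \<in> pre d F" for \<omega>''
      proof -
        have k: "comb_seq n \<omega> (case_nat d \<omega>'') \<in> ?X \<longleftrightarrow> d \<in> G \<omega>"
          using key[of \<omega> "case_nat d \<omega>''"] by (simp only: nat.case(1))
        have "(sh ^^ n) (comb_seq n \<omega> (case_nat d \<omega>'')) = case_nat d \<omega>''" by (rule sh_pow_comb)
        then show ?thesis using k by (simp add: pre_def)
      qed
      then have "{\<omega>''. case_nat d \<omega>'' \<in> {\<omega>'. comb_seq n \<omega> \<omega>' \<in> ?Z}} = (if d \<in> G \<omega> then pre d F else {})"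
        by auto
      then show "emeasure Pmeas {\<omega>''. case_nat d \<omega>'' \<in> {\<omega>'. comb_seq n \<omega> \<omega>' \<in> ?Z}} = indicator (G \<omega>) d * mu d F"
        by (simp add: mu_def split: split_indicator)
    qed
    also have "\<dots> \<le> (\<integral>\<^sup>+d. (4 * ?eY) * indicator (G \<omega>) d \<partial>M0)"
    proof (rule nn_integral_mono_AE)
      show "AE d in M0. indicator (G \<omega>) d * mu d F \<le> (4 * ?eY) * indicator (G \<omega>) d"
        using AE_pos
      proof eventually_elim
        case (elim d)
        then show ?case using dom4[OF F elim] by (simp split: split_indicator)
      qed
    qed
    also have "\<dots> = 4 * ?eY * emeasure M0 (G \<omega>)"
      by (rule nn_integral_cmult_indicator) simp
    finally show ?thesis .
  qed
  have "emeasure Pmeas ?Z = (\<integral>\<^sup>+\<omega>. emeasure Pmeas {\<omega>'. comb_seq n \<omega> \<omega>' \<in> ?Z} \<partial>Pmeas)"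
    by (rule em_split_comb[OF Zm])
  also have "\<dots> \<le> (\<integral>\<^sup>+\<omega>. 4 * ?eY * emeasure Pmeas {\<omega>'. comb_seq n \<omega> \<omega>' \<in> ?X} \<partial>Pmeas)"
    by (rule nn_integral_mono) (subst innerX, rule innerZ)
  also have "\<dots> = 4 * ?eY * (\<integral>\<^sup>+\<omega>. emeasure Pmeas {\<omega>'. comb_seq n \<omega> \<omega>' \<in> ?X} \<partial>Pmeas)"
    by (rule nn_integral_cmult[OF comb_emeas_meas[OF Xm]])
  also have "\<dots> = 4 * ?eY * emeasure Pmeas ?X"
    by (subst em_split_comb[OF Xm, of n]) (rule refl)
  finally show ?thesis .
qed


lemma part_b: "psi_mixing P0"
  unfolding psi_mixing_def
proof (intro exI[of _ "\<lambda>m. if m = 0 then 3 else 0"] conjI allI impI)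
  interpret P: prob_space Pmeas by (rule prob_Pmeas)
  show "\<And>m. 0 \<le> (if m = 0 then 3 else (0::real))" by simp
  show "(\<lambda>m. if m = 0 then 3 else (0::real)) \<longlonglongrightarrow> 0"
    by (rule tendsto_eventually) (auto simp: eventually_sequentially intro!: exI[of _ 1])
  fix m n E F
  assume E: "E \<in> coord_sigma n" and F: "F \<in> sets Omega0"
  have Es: "E \<in> sets Omega0" by (rule coord_sigma_sets[OF E])
  let ?X = "Theta -` E" and ?Y = "Theta -` F"
  let ?Z = "?X \<inter> (sh ^^ (n + m)) -` ?Y"
  have Tm: "(T0 ^^ (n + m)) -` F \<in> sets Omega0"
    using measurable_sets[OF T0_pow_meas F] by simp
  have pre: "Theta -` (E \<inter> (T0 ^^ (n + m)) -` F) = ?Z"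
    by (auto simp: Theta_pow)
  have mZ: "measure P0 (E \<inter> (T0 ^^ (n + m)) -` F) = measure Pmeas ?Z"
    using Es Tm by (subst P0_measure) (auto simp only: pre)
  have mE: "measure P0 E = measure Pmeas ?X" by (simp add: P0_measure Es)
  have mF: "measure P0 F = measure Pmeas ?Y" by (simp add: P0_measure F)
  let ?z = "measure Pmeas ?Z" and ?x = "measure Pmeas ?X" and ?y = "measure Pmeas ?Y"
  have nn: "0 \<le> ?z" "0 \<le> ?x" "0 \<le> ?y" by auto
  show "\<bar>measure P0 (E \<inter> (T0 ^^ (n + m)) -` F) - measure P0 E * measure P0 F\<bar>
        \<le> (if m = 0 then 3 else 0) * measure P0 E * measure P0 F"
  proof (cases "m = 0")
    case True
    have "ennreal ?z \<le> 4 * ennreal ?y * ennreal ?x"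
      using mix_0[OF E F] True by (simp add: P.emeasure_eq_measure)
    also have "\<dots> = ennreal (4 * ?y * ?x)"
      by (simp add: ennreal_mult)
    finally have "?z \<le> 4 * ?y * ?x" using nn by (simp add: ennreal_le_iff)
    then show ?thesis using True nn unfolding mZ mE mF by (simp add: abs_le_iff algebra_simps)
  next
    case False
    have "ennreal ?z = ennreal ?y * ennreal ?x"
      using mix_indep[OF E F, of "n + m"] False by (simp add: P.emeasure_eq_measure)
    also have "\<dots> = ennreal (?y * ?x)" by (simp add: ennreal_mult)
    finally have "?z = ?y * ?x" using nn by simp
    then show ?thesis using False unfolding mZ mE mF by simp
  qed
qed

theorem theorem8:
  shows "distr P0 Omega0 T0 = P0 \<and>
         psi_mixing P0 \<and>
         (\<lambda>n. measure P0 (cyl (\<lambda>_. True) (Suc n) \<inter> cyl (\<lambda>_. True) n)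
                / measure P0 (cyl (\<lambda>_. True) n)) \<longlonglongrightarrow> 0"
  using part_a part_b part_c by blast


end
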